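(* Consider a single element $[x_0,x_p]$ with $p\ge1$, Gauss–Lobatto nodes and the matrices $\mathcal{P},\mathcal{Q}_x,\mathcal{D}_x,\mathcal{B}$ as in the context. Let $a\ge 0$ be a constant, let $\varepsilon_k(t)\ge 0$ ($k=0,\dots,p$) be continuous nodal diffusion coefficients with $\mathcal{E}(t)=\mathrm{diag}(\varepsilon_0(t),\dots,\varepsilon_p(t))$, and let $$\mathcal{Q}_{xx}(\varepsilon)=\mathcal{E}\mathcal{B}\mathcal{D}_x-(\sqrt{\mathcal{E}}\mathcal{D}_x)^T\mathcal{P}(\sqrt{\mathcal{E}}\mathcal{D}_x).$$ Let $\mathbf{U}(t)=(\bar u_0,\dots,\bar u_p)^T$ be a $C^1$ solution of the semi-discrete scheme $$\mathcal{P}\frac{d\mathbf{U}}{dt}+a\,\mathcal{Q}_x\mathbf{U}=\mathcal{Q}_{xx}(\varepsilon)\mathbf{U}+\sigma_0\,e_0\big[a\bar u_0-\varepsilon_0(\mathcal{D}_x\mathbf{U})_0-g_0\big]+\sigma_p\,e_p\big[-\varepsilon_p(\mathcal{D}_x\mathbf{U})_p-g_p\big],$$ where $e_0,e_p$ are the first and last standard unit vectors in $\mathbb{R}^{p+1}$. If $\sigma_0=-1$, $\sigma_p=1$ and the boundary data vanish ($g_0=g_p=0$), then for all $t\ge0$ $$\mathbf{U}(t)^T\mathcal{P}\mathbf{U}(t)+2\int_0^t\big(\sqrt{\mathcal{E}}\mathcal{D}_x\mathbf{U}\big)^T\mathcal{P}\big(\sqrt{\mathcal{E}}\mathcal{D}_x\mathbf{U}\big)\,ds\le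 \mathbf{U}(0)^T\mathcal{P}\mathbf{U}(0).$$
   Context: Gauss–Lobatto nodes $x_0<\dots<x_p$ (including both endpoints) with positive weights $w_0,\dots,w_p$; $\ell_j$ the degree-$p$ Lagrange basis polynomials on these nodes. $\mathcal{P}=\mathrm{diag}(w_0,\dots,w_p)$; $(\mathcal{Q}_x)_{ij}=\int_{x_0}^{x_p}\ell_i\ell_j'\,dx$; $\mathcal{D}_x=\mathcal{P}^{-1}\mathcal{Q}_x$, so $(\mathcal{D}_x\mathbf{U})_k$ is the derivative at $x_k$ of the interpolant $\sum_j\bar u_j\ell_j$; $\mathcal{B}=\mathrm{diag}(-1,0,\dots,0,1)$; $\sqrt{\mathcal{E}}=\mathrm{diag}(\sqrt{\varepsilon_0},\dots,\sqrt{\varepsilon_p})$. This is the discretization of $u_t+au_x=(\varepsilon u_x)_x$ with weakly imposed boundary conditions $au-\varepsilon u_x=g_0$ at the left end and $-\varepsilon u_x=g_p$ at the right end; $\sigma_0,\sigma_p$ are penalty parameters. *)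

theory Defs
  imports "HOL-Analysis.Analysis" "HOL-Computational_Algebra.Polynomial"
begin

text \<open>Vectors in R^(p+1) and (p+1)x(p+1) matrices are represented as functions on
  indices 0..p (values outside are irrelevant).\<close>

definition mat_vec :: "nat \<Rightarrow> (nat \<Rightarrow> nat \<Rightarrow> real) \<Rightarrow> (nat \<Rightarrow> real) \<Rightarrow> nat \<Rightarrow> real" where
  "mat_vec p A v = (\<lambda>i. \<Sum>j\<le>p. A i j * v j)"

definition mat_mul :: "nat \<Rightarrow> (nat \<Rightarrow> nat \<Rightarrow> real) \<Rightarrow> (nat \<Rightarrow> nat \<Rightarrow> real) \<Rightarrow> nat \<Rightarrow> nat \<Rightarrow> real" where
  "mat_mul p A B = (\<lambda>i k. \<Sum>j\<le>p. A i j * B j k)"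

definition mat_transp :: "(nat \<Rightarrow> nat \<Rightarrow> real) \<Rightarrow> nat \<Rightarrow> nat \<Rightarrow> real" where
  "mat_transp A = (\<lambda>i j. A j i)"

definition mat_diag :: "(nat \<Rightarrow> real) \<Rightarrow> nat \<Rightarrow> nat \<Rightarrow> real" where
  "mat_diag d = (\<lambda>i j. if i = j then d i else 0)"

definition mat_diff :: "(nat \<Rightarrow> nat \<Rightarrow> real) \<Rightarrow> (nat \<Rightarrow> nat \<Rightarrow> real) \<Rightarrow> nat \<Rightarrow> nat \<Rightarrow> real" where
  "mat_diff A B = (\<lambda>i j. A i j - B i j)"

definition dot :: "nat \<Rightarrow> (nat \<Rightarrow> real) \<Rightarrow> (nat \<Rightarrow> real) \<Rightarrow> real" where
  "dot p u v = (\<Sum>k\<le>p. u k * v k)"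

definition unit_vec :: "nat \<Rightarrow> nat \<Rightarrow> real" where
  "unit_vec i = (\<lambda>k. if k = i then 1 else 0)"

text \<open>Gauss--Lobatto rule on [x_0,x_p]: p+1 strictly increasing nodes (the endpoints
  x_0, x_p being nodes), positive weights, and exactness for all polynomials of degree
  at most 2p-1 (this characterizes the Gauss--Lobatto rule uniquely).\<close>
definition gauss_lobatto :: "nat \<Rightarrow> (nat \<Rightarrow> real) \<Rightarrow> (nat \<Rightarrow> real) \<Rightarrow> bool" where
  "gauss_lobatto p x w \<longleftrightarrow>
     (\<forall>i j. i < j \<and> j \<le> p \<longrightarrow> x i < x j) \<and>
     (\<forall>k\<le>p. 0 < w k) \<and>
     (\<forall>q :: real poly. degree q \<le> 2 * p - 1 \<longrightarrow>
        integral {x 0..x p} (poly q) = (\<Sum>k\<le>p. w k * poly q (x k)))"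

definition lagrange :: "nat \<Rightarrow> (nat \<Rightarrow> real) \<Rightarrow> nat \<Rightarrow> real \<Rightarrow> real" where
  "lagrange p x j = (\<lambda>y. \<Prod>m\<in>{..p} - {j}. (y - x m) / (x j - x m))"

definition Pmat :: "(nat \<Rightarrow> real) \<Rightarrow> nat \<Rightarrow> nat \<Rightarrow> real" where
  "Pmat w = mat_diag w"

definition Qx :: "nat \<Rightarrow> (nat \<Rightarrow> real) \<Rightarrow> nat \<Rightarrow> nat \<Rightarrow> real" where
  "Qx p x = (\<lambda>i j. integral {x 0..x p} (\<lambda>y. lagrange p x i y * deriv (lagrange p x j) y))"

definition Dx :: "nat \<Rightarrow> (nat \<Rightarrow> real) \<Rightarrow> (nat \<Rightarrow> real) \<Rightarrow> nat \<Rightarrow> nat \<Rightarrow> real" where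
  "Dx p x w = mat_mul p (mat_diag (\<lambda>k. 1 / w k)) (Qx p x)"

definition Bmat :: "nat \<Rightarrow> nat \<Rightarrow> nat \<Rightarrow> real" where
  "Bmat p = mat_diag (\<lambda>k. if k = 0 then -1 else if k = p then 1 else 0)"

definition Qxx :: "nat \<Rightarrow> (nat \<Rightarrow> real) \<Rightarrow> (nat \<Rightarrow> real) \<Rightarrow> (nat \<Rightarrow> real) \<Rightarrow> nat \<Rightarrow> nat \<Rightarrow> real" where
  "Qxx p x w eps =
     mat_diff (mat_mul p (mat_mul p (mat_diag eps) (Bmat p)) (Dx p x w))
       (mat_mul p (mat_mul p (mat_transp (mat_mul p (mat_diag (\<lambda>k. sqrt (eps k))) (Dx p x w))) (Pmat w))
          (mat_mul p (mat_diag (\<lambda>k. sqrt (eps k))) (Dx p x w)))"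

end

theory Submission
  imports Defs
begin

definition lpoly :: "nat \<Rightarrow> (nat \<Rightarrow> real) \<Rightarrow> nat \<Rightarrow> real poly" where
  "lpoly p x j = (\<Prod>m\<in>{..p} - {j}. [:- x m / (x j - x m), 1 / (x j - x m):])"

lemma lagrange_poly: "lagrange p x j = poly (lpoly p x j)"
  unfolding lagrange_def lpoly_def
  by (rule ext) (simp add: poly_prod add_divide_distrib diff_divide_distrib)

lemma lagrange_node:
  assumes inj: "\<And>i m. i \<le> p \<Longrightarrow> m \<le> p \<Longrightarrow> i \<noteq> m \<Longrightarrow> x i \<noteq> x m"
    and "i \<le> p" "k \<le> p"
  shows "lagrange p x i (x k) = (if i = k then 1 else 0)"
proof (cases "i = k")
  case True
  then show ?thesis using assms unfolding lagrange_def
    by (auto intro!: prod.neutral)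
next
  case False
  have "k \<in> {..p} - {i}" using assms False by auto
  then show ?thesis using False unfolding lagrange_def
    by (auto intro!: prod_zero)
qed

lemma deriv_lag: "deriv (lagrange p x j) = poly (pderiv (lpoly p x j))"
  unfolding lagrange_poly by (rule ext) (rule DERIV_imp_deriv, simp)

lemma Qx_sym:
  assumes inj: "\<And>i m. i \<le> p \<Longrightarrow> m \<le> p \<Longrightarrow> i \<noteq> m \<Longrightarrow> x i \<noteq> x m"
    and le: "x 0 \<le> x p" and p: "1 \<le> p" and ij: "i \<le> p" "j \<le> p"
  shows "Qx p x i j + Qx p x j i =
     (if i = p \<and> j = p then 1 else 0) - (if i = 0 \<and> j = 0 then 1 else 0)"
proof -
  let ?li = "lpoly p x i" and ?lj = "lpoly p x j"
  have cont: "\<And>q. continuous_on {x 0..x p} (poly q)"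
    by (intro continuous_intros)
  have dv: "(poly (?li * ?lj) has_vector_derivative poly (pderiv (?li * ?lj)) y) (at y within {x 0..x p})" for y
    unfolding has_real_derivative_iff_has_vector_derivative[symmetric]
    by (rule has_field_derivative_at_within) (rule poly_DERIV)
  have hi: "(poly (pderiv (?li * ?lj)) has_integral
         (poly (?li * ?lj) (x p) - poly (?li * ?lj) (x 0))) {x 0..x p}"
    by (rule fundamental_theorem_of_calculus[OF le dv])
  have eq: "poly (pderiv (?li * ?lj)) = (\<lambda>y. poly ?li y * poly (pderiv ?lj) y + poly ?lj y * poly (pderiv ?li) y)"
    by (rule ext) (simp add: pderiv_mult)
  have "integral {x 0..x p} (\<lambda>y. poly ?li y * poly (pderiv ?lj) y + poly ?lj y * poly (pderiv ?li) y)
      = poly (?li * ?lj) (x p) - poly (?li * ?lj) (x 0)"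
    using hi unfolding eq by (rule integral_unique)
  moreover have "integral {x 0..x p} (\<lambda>y. poly ?li y * poly (pderiv ?lj) y + poly ?lj y * poly (pderiv ?li) y)
     = integral {x 0..x p} (\<lambda>y. poly ?li y * poly (pderiv ?lj) y) + integral {x 0..x p} (\<lambda>y. poly ?lj y * poly (pderiv ?li) y)"
    by (rule integral_add; rule integrable_continuous_interval; intro continuous_intros)
  ultimately have "Qx p x i j + Qx p x j i = lagrange p x i (x p) * lagrange p x j (x p) - lagrange p x i (x 0) * lagrange p x j (x 0)"
    unfolding Qx_def deriv_lag by (simp add: lagrange_poly)
  also have "\<dots> = (if i = p \<and> j = p then 1 else 0) - (if i = 0 \<and> j = 0 then 1 else 0)"
  proof -
    have n: "\<And>i k. i \<le> p \<Longrightarrow> k \<le> p \<Longrightarrow> lagrange p x i (x k) = (if i = k then 1 else 0)"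
      by (rule lagrange_node[OF inj])
    show ?thesis using ij p by (auto simp: n)
  qed
  finally show ?thesis .
qed

lemma mat_vec_mul: "mat_vec p (mat_mul p A B) v = mat_vec p A (mat_vec p B v)"
proof (rule ext)
  fix i
  have "(\<Sum>j\<le>p. (\<Sum>l\<le>p. A i l * B l j) * v j) = (\<Sum>j\<le>p. \<Sum>l\<le>p. A i l * (B l j * v j))"
    by (simp add: sum_distrib_right mult.assoc)
  also have "\<dots> = (\<Sum>l\<le>p. \<Sum>j\<le>p. A i l * (B l j * v j))" by (rule sum.swap)
  also have "\<dots> = (\<Sum>l\<le>p. A i l * (\<Sum>j\<le>p. B l j * v j))" by (simp add: sum_distrib_left)
  finally show "mat_vec p (mat_mul p A B) v i = mat_vec p A (mat_vec p B v) i"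
    by (simp add: mat_vec_def mat_mul_def)
qed

lemma mat_vec_diff: "mat_vec p (mat_diff A B) v = (\<lambda>i. mat_vec p A v i - mat_vec p B v i)"
  by (rule ext) (simp add: mat_vec_def mat_diff_def sum_subtractf left_diff_distrib)

lemma dot_diff: "dot p u (\<lambda>i. f i - g i) = dot p u f - dot p u g"
  by (simp add: dot_def sum_subtractf right_diff_distrib)

lemma dot_transp: "dot p u (mat_vec p (mat_transp A) z) = dot p (mat_vec p A u) z"
proof -
  have "dot p u (mat_vec p (mat_transp A) z) = (\<Sum>k\<le>p. \<Sum>j\<le>p. u k * (A j k * z j))"
    by (simp add: dot_def mat_vec_def mat_transp_def sum_distrib_left)
  also have "\<dots> = (\<Sum>j\<le>p. \<Sum>k\<le>p. u k * (A j k * z j))" by (rule sum.swap)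
  also have "\<dots> = (\<Sum>j\<le>p. (\<Sum>k\<le>p. A j k * u k) * z j)"
    by (rule sum.cong[OF refl]) (simp add: sum_distrib_right sum_distrib_left mult_ac)
  also have "\<dots> = dot p (mat_vec p A u) z"
    by (simp add: dot_def mat_vec_def)
  finally show ?thesis .
qed

lemma mat_vec_diag: "k \<le> p \<Longrightarrow> mat_vec p (mat_diag d) v k = d k * v k"
proof -
  assume k: "k \<le> p"
  have "mat_vec p (mat_diag d) v k = (\<Sum>j\<le>p. if k = j then d k * v j else 0)"
    unfolding mat_vec_def mat_diag_def by (rule sum.cong) auto
  also have "\<dots> = d k * v k" using k by (simp add: sum.delta)
  finally show ?thesis .
qed

lemma dot_diag: "dot p u (mat_vec p (mat_diag d) v) = (\<Sum>k\<le>p. u k * (d k * v k))"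
  unfolding dot_def by (rule sum.cong) (auto simp: mat_vec_diag)

lemma sum_unit: "k0 \<le> p \<Longrightarrow> (\<Sum>k\<le>p. f k * unit_vec k0 k) = (f k0 :: real)"
proof -
  assume k0: "k0 \<le> p"
  have "(\<Sum>k\<le>p. f k * unit_vec k0 k) = (\<Sum>k\<le>p. if k = k0 then f k else 0)"
    unfolding unit_vec_def by (rule sum.cong) auto
  also have "\<dots> = f k0" using k0 by simp
  finally show ?thesis .
qed

lemma double_delta: "(q::nat) \<le> p \<Longrightarrow> (\<Sum>i\<le>p. \<Sum>j\<le>p. if i = q then (if j = q then c else 0) else 0) = (c::real)"
proof -
  assume q: "q \<le> p"
  have c: "(\<Sum>j\<le>p. if j = q then c else 0) = c"
    using sum_unit[OF q, where f="\<lambda>_. c"] unfolding unit_vec_def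
    by (simp add: if_distrib cong: if_cong)
  have "\<And>i. (\<Sum>j\<le>p. if i = q then (if j = q then c else 0) else 0) = (if i = q then c else 0)"
    using c by auto
  then show ?thesis using q by simp
qed

lemma Phi_form:
  "dot p (mat_vec p (mat_mul p (mat_diag d) A) u) (mat_vec p (Pmat w) (mat_vec p (mat_mul p (mat_diag d) A) u))
   = (\<Sum>k\<le>p. w k * (d k * mat_vec p A u k) * (d k * mat_vec p A u k))"
  unfolding Pmat_def dot_diag mat_vec_mul by (rule sum.cong) (auto simp: mat_vec_diag)

lemma Qxx_form:
  assumes p: "1 \<le> p"
  shows "dot p u (mat_vec p (Qxx p x w e) u) =
     e p * u p * mat_vec p (Dx p x w) u p - e 0 * u 0 * mat_vec p (Dx p x w) u 0
     - dot p (mat_vec p (mat_mul p (mat_diag (\<lambda>k. sqrt (e k))) (Dx p x w)) u)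
        (mat_vec p (Pmat w) (mat_vec p (mat_mul p (mat_diag (\<lambda>k. sqrt (e k))) (Dx p x w)) u))"
proof -
  let ?S = "mat_mul p (mat_diag (\<lambda>k. sqrt (e k))) (Dx p x w)"
  let ?z = "mat_vec p (Dx p x w) u"
  have 1: "dot p u (mat_vec p (mat_mul p (mat_mul p (mat_diag e) (Bmat p)) (Dx p x w)) u)
      = e p * u p * ?z p - e 0 * u 0 * ?z 0"
  proof -
    have "dot p u (mat_vec p (mat_mul p (mat_mul p (mat_diag e) (Bmat p)) (Dx p x w)) u) =
       (\<Sum>k\<le>p. u k * (e k * ((if k = 0 then -1 else if k = p then 1 else 0) * ?z k)))"
      unfolding mat_vec_mul dot_def Bmat_def by (rule sum.cong) (auto simp: mat_vec_diag)
    also have "\<dots> = (\<Sum>k\<le>p. (if k = p then e p * u p * ?z p else 0) - (if k = 0 then e 0 * u 0 * ?z 0 else 0))"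
      using p by (intro sum.cong) (auto simp: mult_ac)
    also have "\<dots> = e p * u p * ?z p - e 0 * u 0 * ?z 0"
      by (simp add: sum_subtractf)
    finally show ?thesis .
  qed
  have 2: "dot p u (mat_vec p (mat_mul p (mat_mul p (mat_transp ?S) (Pmat w)) ?S) u)
      = dot p (mat_vec p ?S u) (mat_vec p (Pmat w) (mat_vec p ?S u))"
    unfolding mat_vec_mul[of p "mat_mul p _ _"] mat_vec_mul[of p "mat_transp _"] dot_transp ..
  show ?thesis unfolding Qxx_def mat_vec_diff dot_diff 1 2 ..
qed

lemma Qx_form:
  assumes inj: "\<And>i m. i \<le> p \<Longrightarrow> m \<le> p \<Longrightarrow> i \<noteq> m \<Longrightarrow> x i \<noteq> x m"
    and le: "x 0 \<le> x p" and p: "1 \<le> p"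
  shows "dot p u (mat_vec p (Qx p x) u) = (u p * u p - u 0 * u 0) / 2"
proof -
  let ?Q = "Qx p x"
  have S: "dot p u (mat_vec p ?Q u) = (\<Sum>i\<le>p. \<Sum>j\<le>p. u i * ?Q i j * u j)"
    by (simp add: dot_def mat_vec_def sum_distrib_left mult_ac)
  have S': "(\<Sum>i\<le>p. \<Sum>j\<le>p. u i * ?Q i j * u j) = (\<Sum>i\<le>p. \<Sum>j\<le>p. u i * ?Q j i * u j)"
    by (subst sum.swap) (simp add: mult_ac)
  have "2 * (\<Sum>i\<le>p. \<Sum>j\<le>p. u i * ?Q i j * u j) = (\<Sum>i\<le>p. \<Sum>j\<le>p. u i * (?Q i j + ?Q j i) * u j)"
    by (subst mult_2, subst (2) S') (simp add: sum.distrib[symmetric] distrib_left distrib_right)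
  also have "\<dots> = (\<Sum>i\<le>p. \<Sum>j\<le>p. (if i = p then (if j = p then u p * u p else 0) else 0)
        - (if i = 0 then (if j = 0 then u 0 * u 0 else 0) else 0))"
    using p by (intro sum.cong refl) (auto simp: Qx_sym[OF inj le p])
  also have "\<dots> = u p * u p - u 0 * u 0"
    by (simp only: sum_subtractf double_delta[OF order_refl] double_delta[OF le0])
  finally show ?thesis unfolding S by simp
qed

theorem proposition2:
  fixes p :: nat and x w :: "nat \<Rightarrow> real" and a :: real
    and eps :: "nat \<Rightarrow> real \<Rightarrow> real"
    and U U' :: "real \<Rightarrow> nat \<Rightarrow> real"
    and \<sigma>0 \<sigma>p g0 gp :: real
  assumes p: "1 \<le> p"
    and GL: "gauss_lobatto p x w"
    and a: "0 \<le> a"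
    and eps_nonneg: "\<And>k t. k \<le> p \<Longrightarrow> 0 \<le> t \<Longrightarrow> 0 \<le> eps k t"
    and eps_cont: "\<And>k. k \<le> p \<Longrightarrow> continuous_on {0..} (eps k)"
    and U_deriv: "\<And>k t. k \<le> p \<Longrightarrow> 0 \<le> t \<Longrightarrow>
                    ((\<lambda>s. U s k) has_real_derivative U' t k) (at t within {0..})"
    and U'_cont: "\<And>k. k \<le> p \<Longrightarrow> continuous_on {0..} (\<lambda>t. U' t k)"
    and scheme: "\<And>t. 0 \<le> t \<Longrightarrow>
       \<forall>k\<le>p. mat_vec p (Pmat w) (U' t) k + a * mat_vec p (Qx p x) (U t) k
         = mat_vec p (Qxx p x w (\<lambda>j. eps j t)) (U t) k
           + \<sigma>0 * unit_vec 0 k * (a * U t 0 - eps 0 t * mat_vec p (Dx p x w) (U t) 0 - g0)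
           + \<sigma>p * unit_vec p k * (- eps p t * mat_vec p (Dx p x w) (U t) p - gp)"
    and sigma0: "\<sigma>0 = -1" and sigmap: "\<sigma>p = 1"
    and g0: "g0 = 0" and gp: "gp = 0"
    and t: "0 \<le> t"
  shows "dot p (U t) (mat_vec p (Pmat w) (U t))
         + 2 * integral {0..t} (\<lambda>s.
             dot p (mat_vec p (mat_mul p (mat_diag (\<lambda>k. sqrt (eps k s))) (Dx p x w)) (U s))
                   (mat_vec p (Pmat w)
                      (mat_vec p (mat_mul p (mat_diag (\<lambda>k. sqrt (eps k s))) (Dx p x w)) (U s))))
         \<le> dot p (U 0) (mat_vec p (Pmat w) (U 0))"
proof -
  have inj: "\<And>i m. i \<le> p \<Longrightarrow> m \<le> p \<Longrightarrow> i \<noteq> m \<Longrightarrow> x i \<noteq> x m"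
  proof -
    fix i m assume "i \<le> p" "m \<le> p" "i \<noteq> m"
    then have "x i < x m \<or> x m < x i" using GL unfolding gauss_lobatto_def
      by (cases "i < m") (auto)
    then show "x i \<noteq> x m" by auto
  qed
  have le: "x 0 \<le> x p" using GL p unfolding gauss_lobatto_def
    by (auto intro: less_imp_le)
  define D where "D = Dx p x w"
  define Phi where "Phi = (\<lambda>s.
             dot p (mat_vec p (mat_mul p (mat_diag (\<lambda>k. sqrt (eps k s))) (Dx p x w)) (U s))
                   (mat_vec p (Pmat w)
                      (mat_vec p (mat_mul p (mat_diag (\<lambda>k. sqrt (eps k s))) (Dx p x w)) (U s))))"
  define En where "En = (\<lambda>s. \<Sum>k\<le>p. w k * (U s k * U s k))"
  define En' where "En' = (\<lambda>s. \<Sum>k\<le>p. 2 * (U s k * (w k * U' s k)))"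
  have En_dot: "\<And>s. dot p (U s) (mat_vec p (Pmat w) (U s)) = En s"
    unfolding En_def Pmat_def dot_diag by (simp add: mult_ac)
  have key: "En' s \<le> - 2 * Phi s" if s: "0 \<le> s" for s
  proof -
    let ?u = "U s" and ?v = "U' s"
    let ?z = "mat_vec p D ?u"
    have sch: "w k * ?v k = mat_vec p (Qxx p x w (\<lambda>j. eps j s)) ?u k - a * mat_vec p (Qx p x) ?u k
        + ((a * ?u 0 - eps 0 s * ?z 0) * - unit_vec 0 k)
        + ((- eps p s * ?z p) * unit_vec p k)" if k: "k \<le> p" for k
    proof -
      have "mat_vec p (Pmat w) ?v k = w k * ?v k" using k by (simp add: Pmat_def mat_vec_diag)
      then show ?thesis using scheme[OF s] k unfolding sigma0 sigmap g0 gp D_def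
        by (auto simp: algebra_simps)
    qed
    have "(\<Sum>k\<le>p. ?u k * (w k * ?v k)) = (\<Sum>k\<le>p. ?u k * mat_vec p (Qxx p x w (\<lambda>j. eps j s)) ?u k
          - a * (?u k * mat_vec p (Qx p x) ?u k)
        + ?u k * ((a * ?u 0 - eps 0 s * ?z 0) * - unit_vec 0 k)
        + ?u k * ((- eps p s * ?z p) * unit_vec p k))"
      by (rule sum.cong) (auto simp: sch algebra_simps)
    also have "\<dots> = dot p ?u (mat_vec p (Qxx p x w (\<lambda>j. eps j s)) ?u) - a * dot p ?u (mat_vec p (Qx p x) ?u)
        + ?u 0 * ((a * ?u 0 - eps 0 s * ?z 0) * - 1) + ?u p * (- eps p s * ?z p)"
      using p by (simp add: sum.distrib sum_subtractf dot_def sum_distrib_left sum_unit mult.assoc[symmetric],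
          (simp add: algebra_simps)?)
    also have "\<dots> = - Phi s - a * (?u p * ?u p + ?u 0 * ?u 0) / 2"
    proof -
      have q1: "dot p ?u (mat_vec p (Qx p x) ?u) = (?u p * ?u p - ?u 0 * ?u 0) / 2"
        by (rule Qx_form[OF inj le p])
      have q2: "dot p ?u (mat_vec p (Qxx p x w (\<lambda>j. eps j s)) ?u) =
        eps p s * ?u p * ?z p - eps 0 s * ?u 0 * ?z 0 - Phi s"
        unfolding Qxx_form[OF p] Phi_def D_def by simp
      show ?thesis unfolding q1 q2 by (simp add: field_simps)
    qed
    also have "\<dots> \<le> - Phi s"
      using a by (simp add: add_nonneg_nonneg)
    finally have "(\<Sum>k\<le>p. ?u k * (w k * ?v k)) \<le> - Phi s" .
    then show ?thesis unfolding En'_def by (simp add: sum_distrib_left[symmetric])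
  qed
  have Ucont: "continuous_on {0..t} (\<lambda>s. U s k)" if "k \<in> {..p}" for k
  proof -
    have "continuous_on {0..} (\<lambda>s. U s k)"
      unfolding continuous_on_eq_continuous_within
      using that by (auto intro: DERIV_continuous U_deriv)
    then show ?thesis by (rule continuous_on_subset) auto
  qed
  have U'cont: "continuous_on {0..t} (\<lambda>s. U' s k)" if "k \<in> {..p}" for k
    using U'_cont[of k] that by (auto intro: continuous_on_subset)
  have epscont: "continuous_on {0..t} (eps k)" if "k \<in> {..p}" for k
    using eps_cont[of k] that by (auto intro: continuous_on_subset)
  have Phi_eq: "Phi = (\<lambda>s. \<Sum>k\<le>p. w k * (sqrt (eps k s) * (\<Sum>j\<le>p. D k j * U s j)) * (sqrt (eps k s) * (\<Sum>j\<le>p. D k j * U s j)))"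
    unfolding Phi_def Phi_form D_def by (simp add: mat_vec_def)
  have Phicont: "continuous_on {0..t} Phi"
    unfolding Phi_eq by (intro continuous_intros Ucont epscont)
  have En'cont: "continuous_on {0..t} En'"
    unfolding En'_def by (intro continuous_intros Ucont U'cont)
  have der: "(En has_vector_derivative En' s) (at s within {0..t})" if "s \<in> {0..t}" for s
  proof -
    have "\<And>k. k \<in> {..p} \<Longrightarrow> ((\<lambda>s. w k * (U s k * U s k)) has_real_derivative 2 * (U s k * (w k * U' s k))) (at s within {0..t})"
    proof -
      fix k assume k: "k \<in> {..p}"
      have d: "((\<lambda>s. U s k) has_real_derivative U' s k) (at s within {0..t})"
        using U_deriv[of k s] k that by (auto intro: DERIV_subset)
      have "((\<lambda>s. w k * (U s k * U s k)) has_real_derivative w k * (U' s k * U s k + U' s k * U s k)) (at s within {0..t})"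
        by (intro DERIV_cmult DERIV_mult d)
      then show "((\<lambda>s. w k * (U s k * U s k)) has_real_derivative 2 * (U s k * (w k * U' s k))) (at s within {0..t})"
        by (simp add: algebra_simps)
    qed
    then have "(En has_real_derivative En' s) (at s within {0..t})"
      unfolding En_def En'_def by (rule DERIV_sum)
    then show ?thesis by (simp add: has_real_derivative_iff_has_vector_derivative)
  qed
  have I1: "(En' has_integral (En t - En 0)) {0..t}"
    by (rule fundamental_theorem_of_calculus[OF t der])
  have I2: "((\<lambda>s. - 2 * Phi s) has_integral (- 2 * integral {0..t} Phi)) {0..t}"
    by (intro has_integral_mult_right integrable_integral integrable_continuous_interval Phicont)
  have "En t - En 0 \<le> - 2 * integral {0..t} Phi"
    by (rule has_integral_le[OF I1 I2]) (use key in auto)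
  then show ?thesis unfolding En_dot Phi_def[symmetric] by simp
qed

end
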